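(* Let $C=\begin{pmatrix}1&-2\\2&-1\end{pmatrix}$, let $n\ge 3$ be an odd integer, and put $\omega=e^{2\pi i/n}$, $\xi=e^{\pi i/3}$, $\eta=e^{\pi i/(2n)}$. For $0\le j,k\le n-1$ define $$X_{n,j,k}=\frac{(-1)^{(n+1)/2}}{i}\begin{pmatrix}-\xi^{-1}\eta\,\omega^{j}+\xi\,\eta^{-1}\omega^{k} & \eta\,\omega^{j}-\eta^{-1}\omega^{k}\\ -\eta\,\omega^{j}+\eta^{-1}\omega^{k} & \xi\,\eta\,\omega^{j}-\xi^{-1}\eta^{-1}\omega^{k}\end{pmatrix}.$$ Then the set of complex $2\times 2$ matrices $X$ satisfying $X^n=C^n$ is exactly $\{X_{n,j,k}:0\le j,k\le n-1\}$, and these $n^2$ matrices are pairwise distinct; in particular $X^n=C^n$ has exactly $n^2$ solutions.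
   Context: $i$ denotes the imaginary unit; all matrices have complex entries. *)

theory Defs
  imports "HOL-Analysis.Analysis"
begin

type_synonym cmat2 = "complex ^ 2 ^ 2"

text \<open>Matrix power with respect to matrix multiplication (the ring structure on vec
  in the library is componentwise, so we cannot use ^).\<close>
primrec matpow :: "'a::comm_ring_1 ^ 'n ^ 'n \<Rightarrow> nat \<Rightarrow> 'a ^ 'n ^ 'n" where
  "matpow A 0 = mat 1"
| "matpow A (Suc m) = A ** matpow A m"

definition mat2 :: "complex \<Rightarrow> complex \<Rightarrow> complex \<Rightarrow> complex \<Rightarrow> cmat2" where
  "mat2 a b c d = (\<chi> i j. if i = 1 then (if j = 1 then a else b) else (if j = 1 then c else d))"

definition Cmat :: cmat2 where
  "Cmat = mat2 1 (-2) 2 (-1)"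

definition Xsol :: "nat \<Rightarrow> nat \<Rightarrow> nat \<Rightarrow> cmat2" where
  "Xsol n j k =
    (let \<omega> = exp (2 * pi * \<i> / of_nat n);
         \<xi> = exp (pi * \<i> / 3);
         \<eta> = exp (pi * \<i> / (2 * of_nat n));
         s = (-1) ^ ((n + 1) div 2) / \<i>
     in (\<chi> i l. s * (mat2
           (- inverse \<xi> * \<eta> * \<omega> ^ j + \<xi> * inverse \<eta> * \<omega> ^ k)
           (\<eta> * \<omega> ^ j - inverse \<eta> * \<omega> ^ k)
           (- \<eta> * \<omega> ^ j + inverse \<eta> * \<omega> ^ k)
           (\<xi> * \<eta> * \<omega> ^ j - inverse \<xi> * inverse \<eta> * \<omega> ^ k)) $ i $ l))"

end

theory Submission
  imports Defs
begin

lemma mat2_mult: "mat2 a b c d ** mat2 a' b' c' d' = mat2 (a*a' + b*c') (a*b' + b*d') (c*a' + d*c') (c*b' + d*d')"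
  by (simp add: mat2_def matrix_matrix_mult_def vec_eq_iff forall_2 sum_2)

lemma mat2_eta: "X = mat2 (X$1$1) (X$1$2) (X$2$1) (X$2$2)"
  by (simp add: mat2_def vec_eq_iff forall_2)

lemma mat2_eq_iff: "mat2 a b c d = mat2 a' b' c' d' \<longleftrightarrow> a = a' \<and> b = b' \<and> c = c' \<and> d = d'"
  by (simp add: mat2_def vec_eq_iff forall_2)

lemma mat2_one: "mat 1 = mat2 1 0 0 1"
  by (simp add: mat2_def mat_def vec_eq_iff forall_2)

definition NN :: "complex \<Rightarrow> complex \<Rightarrow> complex \<Rightarrow> complex \<Rightarrow> cmat2" where
  "NN x y u v = mat2 ((- (u * y) + v * x)/(x-y)) ((u-v)/(x-y)) ((v-u)/(x-y)) ((u*x - v * y)/(x-y))"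

lemma hdiv: "(t::complex) \<noteq> 0 \<Longrightarrow> A*B + C*D = t*E \<Longrightarrow> (A/t)*(B/t) + (C/t)*(D/t) = E/t"
proof -
  assume "t \<noteq> 0" "A*B + C*D = t*E"
  then have "(A/t)*(B/t) + (C/t)*(D/t) = (A*B + C*D)/(t*t)" by (simp add: field_simps)
  also have "\<dots> = E/t" using \<open>t \<noteq> 0\<close> \<open>A*B + C*D = t*E\<close> by simp
  finally show ?thesis .
qed

lemma NN_mult:
  assumes "x*y = 1" "x - y \<noteq> 0"
  shows "NN x y u v ** NN x y u' v' = NN x y (u*u') (v * v')"
proof -
  have e: "x*y = 1" by fact
  have x0: "x \<noteq> 0" using e by auto
  have y: "y = inverse x" using e by (metis inverse_unique)
  show ?thesis unfolding NN_def mat2_mult mat2_eq_iff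
    by (intro conjI hdiv assms(2)) (use x0 in \<open>simp_all add: y field_simps\<close>)
qed

lemma NN_one:
  assumes "x - y \<noteq> 0"
  shows "NN x y 1 1 = mat 1"
  using assms unfolding NN_def mat2_one mat2_eq_iff by (simp add: field_simps)

lemma NN_pow:
  assumes "x*y = 1" "x - y \<noteq> 0"
  shows "matpow (NN x y u v) m = NN x y (u^m) (v^m)"
  by (induction m) (simp_all add: NN_one[OF assms(2)] NN_mult[OF assms])

lemma NN_inj:
  assumes "x - y \<noteq> 0" "NN x y u v = NN x y u' v'"
  shows "u = u' \<and> v = v'"
proof -
  from assms(2) have "(u-v)/(x-y) = (u'-v')/(x-y)" "(- (u * y) + v * x)/(x-y) = (- (u' * y) + v' * x)/(x-y)"
    unfolding NN_def mat2_eq_iff by simp_all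
  then have a: "u - v = u' - v'" "- (u * y) + v * x = - (u' * y) + v' * x"
    using assms(1) by (simp_all only: divide_cancel_right, simp_all)
  have "(u-u')*(x-y) = ((- (u * y) + v * x) - (- (u' * y) + v' * x)) + x*((u-v)-(u'-v'))"
    by (simp add: algebra_simps)
  then have "(u - u') * (x - y) = 0" using a by simp
  with assms(1) have "u = u'" by simp
  with a show ?thesis by simp
qed

lemma NN_Cmat:
  assumes "x + y = 1" "x - y \<noteq> 0"
  shows "NN x y (-(x-y)) (x-y) = Cmat"
proof -
  have y: "y = 1 - x" using assms(1) by (simp add: algebra_simps)
  have "y + x*x = x + y*y" unfolding y by (simp add: algebra_simps)
  then show ?thesis using assms unfolding NN_def Cmat_def mat2_eq_iff by (simp add: field_simps)
qed


lemma xi_val: "exp (pi * \<i> / 3) = (1 + \<i> * of_real (sqrt 3)) / 2"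
proof -
  have "exp (pi * \<i> / 3) = cis (pi/3)" by (simp add: cis_conv_exp mult.commute)
  also have "\<dots> = Complex (1/2) (sqrt 3 / 2)" by (simp add: cis.code cos_60 sin_60)
  also have "\<dots> = (1 + \<i> * of_real (sqrt 3)) / 2" by (simp add: complex_eq_iff)
  finally show ?thesis .
qed

lemma r3_sq: "(of_real (sqrt 3) :: complex) * of_real (sqrt 3) = 3"
proof -
  have "(of_real (sqrt 3) :: complex) * of_real (sqrt 3) = of_real (sqrt 3 * sqrt 3)"
    by (rule of_real_mult[symmetric])
  also have "sqrt 3 * sqrt 3 = (3::real)" by simp
  finally show ?thesis by simp
qed

lemma xi_inv0: assumes "r * r = (3::complex)" shows "((1 + \<i> * r) / 2) * ((1 - \<i> * r) / 2) = 1"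
proof -
  have "(1 + \<i> * r) * (1 - \<i> * r) = 1 - (\<i> * \<i>) * (r * r)"
    by (simp add: algebra_simps)
  also have "\<dots> = 4" unfolding assms by simp
  finally have e: "(1 + \<i> * r) * (1 - \<i> * r) = 4" .
  have "((1 + \<i> * r) / 2) * ((1 - \<i> * r) / 2) = ((1 + \<i> * r) * (1 - \<i> * r)) / 4" by simp
  then show ?thesis unfolding e by simp
qed

lemma xi_inv: "inverse (exp (pi * \<i> / 3)) = (1 - \<i> * of_real (sqrt 3)) / 2"
  unfolding xi_val by (rule inverse_unique[OF xi_inv0[OF r3_sq]])

lemma xi_facts:
  "exp (pi * \<i> / 3) * inverse (exp (pi * \<i> / 3)) = 1"
  "exp (pi * \<i> / 3) + inverse (exp (pi * \<i> / 3)) = 1"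
  "exp (pi * \<i> / 3) - inverse (exp (pi * \<i> / 3)) \<noteq> 0"
proof -
  show "exp (pi * \<i> / 3) * inverse (exp (pi * \<i> / 3)) = 1" by simp
  show "exp (pi * \<i> / 3) + inverse (exp (pi * \<i> / 3)) = 1"
    unfolding xi_inv unfolding xi_val by (simp add: field_simps)
  have "exp (pi * \<i> / 3) - inverse (exp (pi * \<i> / 3)) = \<i> * of_real (sqrt 3)"
    unfolding xi_inv unfolding xi_val by (simp add: field_simps)
  then show "exp (pi * \<i> / 3) - inverse (exp (pi * \<i> / 3)) \<noteq> 0" by simp
qed

lemma eta_pow: "n \<noteq> 0 \<Longrightarrow> exp (pi * \<i> / (2 * of_nat n)) ^ n = \<i>"
proof -
  assume n: "n \<noteq> 0"
  have "exp (pi * \<i> / (2 * of_nat n)) ^ n = exp (of_nat n * (pi * \<i> / (2 * of_nat n)))"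
    by (rule exp_of_nat_mult[symmetric])
  also have "of_nat n * (pi * \<i> / (2 * of_nat n)) = \<i> * of_real (pi/2)"
    using n by (simp add: field_simps)
  also have "exp \<dots> = \<i>" by (metis cis_conv_exp cis_pi_half)
  finally show ?thesis .
qed

lemma omega_pow: "exp (2 * pi * \<i> / of_nat n) ^ j = exp (2 * of_real pi * \<i> * of_nat j / of_nat n)"
  by (subst exp_of_nat_mult[symmetric]) (simp add: field_simps)

lemma omega_n: "n \<noteq> 0 \<Longrightarrow> exp (2 * pi * \<i> / of_nat n) ^ n = 1"
  using complex_root_unity[of n 1] by simp

lemma s_pow:
  assumes "odd n"
  shows "((-1) ^ ((n + 1) div 2) / \<i> :: complex) ^ n = \<i>"
proof -
  define m where "m = (n + 1) div 2"
  define s :: complex where "s = (-1) ^ m / \<i>"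
  have nm: "n + 1 = 2 * m" using assms unfolding m_def by presburger
  have p: "((-1::complex)^m)^2 = 1" by (simp add: power_mult[symmetric])
  have s2: "s^2 = -1" unfolding s_def power_divide p by simp
  have "s ^ (n + 1) = (-1)^m" unfolding nm power_mult s2 by simp
  moreover have "s \<noteq> 0" unfolding s_def by simp
  ultimately have "s ^ n = (-1)^m / s" by (simp add: field_simps)
  also have "\<dots> = \<i>" unfolding s_def by simp
  finally show ?thesis unfolding s_def m_def .
qed


definition xi0 :: complex where "xi0 = exp (pi * \<i> / 3)"
definition eta0 :: "nat \<Rightarrow> complex" where "eta0 n = exp (pi * \<i> / (2 * of_nat n))"
definition om :: "nat \<Rightarrow> complex" where "om n = exp (2 * pi * \<i> / of_nat n)"
definition sg :: "nat \<Rightarrow> complex" where "sg n = (-1) ^ ((n + 1) div 2) / \<i>"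

lemma chi_scale: "(\<chi> i l. s * mat2 a b c d $ i $ l) = mat2 (s*a) (s*b) (s*c) (s*d)"
  by (simp add: mat2_def vec_eq_iff forall_2)

lemma NN_gen: "x - y \<noteq> 0 \<Longrightarrow> NN x y (s*(x-y)*a) (s*(x-y)*b) = mat2 (s*(-y*a + x*b)) (s*(a-b)) (s*(-a+b)) (s*(x*a - y*b))"
  unfolding NN_def mat2_eq_iff by (simp add: field_simps)

lemma Xsol_NN:
  "Xsol n j k = NN xi0 (inverse xi0) (sg n * (xi0 - inverse xi0) * (eta0 n * om n ^ j))
                 (sg n * (xi0 - inverse xi0) * (inverse (eta0 n) * om n ^ k))"
proof -
  have t: "xi0 - inverse xi0 \<noteq> 0" using xi_facts(3) unfolding xi0_def .
  show ?thesis
    unfolding NN_gen[OF t] Xsol_def Let_def chi_scale mat2_eq_iff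
      xi0_def[symmetric] eta0_def[symmetric] om_def[symmetric] sg_def[symmetric]
    by (simp add: algebra_simps)
qed

lemma comm_NN:
  assumes xy: "x + y = 1" "x - y \<noteq> 0" and c: "c \<noteq> 0"
    and cm: "X ** mat2 c (-2*c) (2*c) (-c) = mat2 c (-2*c) (2*c) (-c) ** X"
  shows "\<exists>u v. X = NN x y u v"
proof -
  obtain a b e d where X: "X = mat2 a b e d" using mat2_eta by blast
  have E: "a*c + b*(2*c) = c*a + (-2*c)*e" "a*(-2*c) + b*(-c) = c*b + (-2*c)*d"
    using cm unfolding X mat2_mult mat2_eq_iff by blast+
  have "c*(2*(b+e)) = (a*c + b*(2*c)) - (c*a + (-2*c)*e)" by (simp add: algebra_simps)
  then have "c*(2*(b+e)) = 0" by (simp only: E(1) diff_self)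
  with c have "b + e = 0" by (simp only: mult_eq_0_iff) simp
  then have e: "e = -b" by (simp add: eq_neg_iff_add_eq_0 add.commute)
  have "c*(2*(a+b-d)) = (c*b + (-2*c)*d) - (a*(-2*c) + b*(-c))" by (simp add: algebra_simps)
  then have "c*(2*(a+b-d)) = 0" by (simp only: E(2)[symmetric] diff_self)
  with c have "a + b - d = 0" by (simp only: mult_eq_0_iff) simp
  then have d: "d = a + b" by simp
  define t where "t = x - y"
  define u where "u = a + b/2 + b*t/2"
  define v where "v = a + b/2 - b*t/2"
  have t0: "t \<noteq> 0" using xy t_def by simp
  have y: "y = 1 - x" using xy(1) by (simp add: algebra_simps)
  have n1: "- (u * y) + v * x = a * t" unfolding u_def v_def t_def y by (simp add: field_simps)
  have n2: "u - v = b * t" unfolding u_def v_def by (simp add: field_simps)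
  have n3: "v - u = e * t" unfolding u_def v_def e by (simp add: field_simps)
  have n4: "u * x - v * y = d * t" unfolding u_def v_def t_def d y by (simp add: field_simps)
  have "NN x y u v = mat2 a b e d"
    unfolding NN_def t_def[symmetric] mat2_eq_iff n1 n2 n3 n4 using t0 by simp
  then show ?thesis unfolding X by metis
qed

lemma root_om:
  assumes "n \<noteq> 0" "w \<noteq> 0" "z^n = w^n"
  shows "\<exists>j<n. z = w * om n ^ j"
proof -
  have "(z/w)^n = 1" using assms by (simp add: power_divide)
  then have "z/w \<in> {z::complex. z^n = 1}" by simp
  also have "\<dots> = {exp(2 * of_real pi * \<i> * of_nat j / of_nat n) | j. j < n}"
    using assms(1) by (intro complex_roots_unity) simp
  finally obtain j where j: "j < n" "z/w = exp(2 * of_real pi * \<i> * of_nat j / of_nat n)" by blast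
  then have "z = w * om n ^ j" unfolding om_def omega_pow using assms(2) by (simp add: field_simps)
  with j show ?thesis by blast
qed


lemma matpow_comm: "A ** matpow A m = matpow A m ** A"
  by (induction m) (simp_all add: matrix_mul_assoc)

lemma NN_scaled:
  assumes "x + y = 1" "x - y \<noteq> 0"
  shows "NN x y (-(c*(x-y))) (c*(x-y)) = mat2 c (-2*c) (2*c) (-c)"
proof -
  have y: "y = 1 - x" using assms(1) by (simp add: algebra_simps)
  have "c*(x-y)*y + c*(x-y)*x = c*(x-y)" unfolding y by (simp add: algebra_simps)
  moreover have "-(c*(x-y))*x - c*(x-y)*y = -c*(x-y)" unfolding y by (simp add: algebra_simps)
  ultimately show ?thesis using assms(2) unfolding NN_def mat2_eq_iff
    by (simp add: field_simps)
qed

theorem mainTheorem1: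
  fixes n :: nat
  assumes "n \<ge> 3" and "odd n"
  shows "{X :: cmat2. matpow X n = matpow Cmat n} = {Xsol n j k | j k. j < n \<and> k < n}
         \<and> inj_on (\<lambda>(j, k). Xsol n j k) ({..<n} \<times> {..<n})
         \<and> card {X :: cmat2. matpow X n = matpow Cmat n} = n ^ 2"
proof -
  define x where "x = xi0"
  define y where "y = inverse xi0"
  define t where "t = x - y"
  define e where "e = eta0 n"
  define a0 where "a0 = sg n * t * e"
  define b0 where "b0 = sg n * t * inverse e"
  define T where "T = t ^ n"
  have n0: "n \<noteq> 0" using assms by simp
  have xy1: "x * y = 1" "x + y = 1" and t0: "t \<noteq> 0" and xy0: "x - y \<noteq> 0"
    using xi_facts unfolding x_def y_def t_def xi0_def by auto
  have e0: "e \<noteq> 0" unfolding e_def eta0_def by simp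
  have sg0: "sg n \<noteq> 0" unfolding sg_def by simp
  have a00: "a0 \<noteq> 0" unfolding a0_def using e0 sg0 t0 by simp
  have b00: "b0 \<noteq> 0" unfolding b0_def using e0 sg0 t0 by simp
  have sgn: "sg n ^ n = \<i>" unfolding sg_def using s_pow[OF assms(2)] .
  have en: "e ^ n = \<i>" unfolding e_def eta0_def using eta_pow[OF n0] .
  have on: "om n ^ n = 1" unfolding om_def using omega_n[OF n0] .
  have ii: "\<i> * z * \<i> = - z" for z :: complex
  proof -
    have "\<i> * z * \<i> = (\<i> * \<i>) * z" by (simp only: ac_simps)
    then show ?thesis by simp
  qed
  have ii2: "\<i> * z * inverse \<i> = z" for z :: complex
  proof -
    have "\<i> * z * inverse \<i> = (\<i> * inverse \<i>) * z" by (simp only: ac_simps)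
    then show ?thesis by simp
  qed
  have a0n: "a0 ^ n = - T" unfolding a0_def T_def power_mult_distrib sgn en by (rule ii)
  have b0n: "b0 ^ n = T" unfolding b0_def T_def power_mult_distrib sgn power_inverse en by (rule ii2)
  have pm: "(- t)^n = - (t^n)" using assms(2) by simp
  have Cn: "matpow Cmat n = NN x y (-T) T"
  proof -
    have "matpow Cmat n = matpow (NN x y (-t) t) n"
      unfolding t_def by (simp only: NN_Cmat[OF xy1(2) xy0])
    also have "\<dots> = NN x y ((-t)^n) (t^n)" by (rule NN_pow[OF xy1(1) xy0])
    finally show ?thesis unfolding pm T_def .
  qed
  have XsolN: "Xsol n j k = NN x y (a0 * om n ^ j) (b0 * om n ^ k)" for j k
    unfolding Xsol_NN a0_def b0_def x_def y_def t_def e_def by (simp add: mult.assoc)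
  define S where "S = {X :: cmat2. matpow X n = matpow Cmat n}"
  have sub1: "S \<subseteq> {Xsol n j k | j k. j < n \<and> k < n}"
  proof
    fix X assume "X \<in> S"
    then have XN: "matpow X n = NN x y (-T) T" unfolding S_def Cn by simp
    define c where "c = t ^ (n - 1)"
    have "T = c * t" unfolding c_def T_def using power_minus_mult[of n t] n0 by simp
    then have Tc: "T = c * (x - y)" unfolding t_def .
    have c0: "c \<noteq> 0" unfolding c_def using t0 by simp
    have M: "matpow X n = mat2 c (-2*c) (2*c) (-c)"
      unfolding XN Tc NN_scaled[OF xy1(2) xy0] ..
    have "X ** mat2 c (-2*c) (2*c) (-c) = mat2 c (-2*c) (2*c) (-c) ** X"
      using matpow_comm[of X n] unfolding M .
    then obtain u v where X: "X = NN x y u v" using comm_NN[OF xy1(2) xy0 c0] by blast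
    have "NN x y (u^n) (v^n) = NN x y (-T) T" using XN unfolding X NN_pow[OF xy1(1) xy0] .
    then have "u^n = -T" "v^n = T" using NN_inj[OF xy0] by auto
    then have "u^n = a0^n" "v^n = b0^n" using a0n b0n by simp_all
    obtain j where "j < n" "u = a0 * om n ^ j" using root_om[OF n0 a00 \<open>u^n = a0^n\<close>] by blast
    moreover obtain k where "k < n" "v = b0 * om n ^ k" using root_om[OF n0 b00 \<open>v^n = b0^n\<close>] by blast
    ultimately show "X \<in> {Xsol n j k | j k. j < n \<and> k < n}" unfolding X XsolN by blast
  qed
  have sub2: "{Xsol n j k | j k. j < n \<and> k < n} \<subseteq> S"
  proof
    fix X assume "X \<in> {Xsol n j k | j k. j < n \<and> k < n}"
    then obtain j k where X: "X = Xsol n j k" by blast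
    have "(om n ^ j) ^ n = 1" "(om n ^ k) ^ n = 1"
      by (simp_all add: power_mult[symmetric] mult.commute[of _ n] power_mult on)
    then have "matpow X n = NN x y (-T) T"
      unfolding X XsolN NN_pow[OF xy1(1) xy0] power_mult_distrib a0n b0n by simp
    then show "X \<in> S" unfolding S_def Cn by simp
  qed
  have eqS: "S = {Xsol n j k | j k. j < n \<and> k < n}" using sub1 sub2 by blast
  have inj: "inj_on (\<lambda>(j, k). Xsol n j k) ({..<n} \<times> {..<n})"
  proof (rule inj_onI, clarify)
    fix j k j' k' assume jk: "j < n" "k < n" "j' < n" "k' < n" and eq: "Xsol n j k = Xsol n j' k'"
    then have "a0 * om n ^ j = a0 * om n ^ j'" "b0 * om n ^ k = b0 * om n ^ k'"
      unfolding XsolN using NN_inj[OF xy0] by blast+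
    then have "om n ^ j = om n ^ j'" "om n ^ k = om n ^ k'" using a00 b00 by simp_all
    then have "j mod n = j' mod n" "k mod n = k' mod n"
      unfolding om_def omega_pow using complex_root_unity_eq[of n] n0 by auto
    then show "j = j' \<and> k = k'" using jk by simp
  qed
  have img: "{Xsol n j k | j k. j < n \<and> k < n} = (\<lambda>(j, k). Xsol n j k) ` ({..<n} \<times> {..<n})"
    by auto
  have "card S = n ^ 2" unfolding eqS img card_image[OF inj] by (simp add: power2_eq_square)
  then show ?thesis using eqS inj unfolding S_def by blast
qed

end
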